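(* If a nontrivial real Banach space $X$ has the strong diameter $2$ property, then $X^*$ contains a subspace isomorphic to $\ell_1$.
   Context: A slice of the closed unit ball $B_X$ is a set $\{x\in B_X: x^*(x)>1-\alpha\}$ with $x^*\in S_{X^*}$, $\alpha>0$. $X$ has the strong diameter $2$ property if every convex combination $\sum_{i=1}^n\lambda_iS_i$ ($n\in\mathbb{N}$, $\lambda_i\geq0$, $\sum\lambda_i=1$, $S_i$ slices of $B_X$) has diameter $2$. *)

theory Defs
  imports "HOL-Analysis.Analysis"
begin

definition slice :: "('a::real_normed_vector \<Rightarrow>\<^sub>L real) \<Rightarrow> real \<Rightarrow> 'a set" where
  "slice f \<alpha> = {x. norm x \<le> 1 \<and> blinfun_apply f x > 1 - \<alpha>}"

definition strong_diameter_two :: "'a::real_normed_vector itself \<Rightarrow> bool" where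
  "strong_diameter_two _ \<longleftrightarrow>
     (\<forall>(n::nat) (lam::nat \<Rightarrow> real) (f::nat \<Rightarrow> ('a \<Rightarrow>\<^sub>L real)) (\<alpha>::nat \<Rightarrow> real).
        n \<ge> 1 \<and> (\<forall>i<n. lam i \<ge> 0 \<and> norm (f i) = 1 \<and> \<alpha> i > 0) \<and> (\<Sum>i<n. lam i) = 1
        \<longrightarrow> diameter {(\<Sum>i<n. lam i *\<^sub>R x i) | x::nat \<Rightarrow> 'a. \<forall>i<n. x i \<in> slice (f i) (\<alpha> i)} = 2)"

definition ell1 :: "(nat \<Rightarrow> real) set" where
  "ell1 = {a. summable (\<lambda>n. \<bar>a n\<bar>)}"

definition ell1_norm :: "(nat \<Rightarrow> real) \<Rightarrow> real" where
  "ell1_norm a = (\<Sum>n. \<bar>a n\<bar>)"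

text \<open>A normed space Y contains a subspace isomorphic to l_1: there is a linear
  isomorphic embedding T of l_1 into Y (its image is then such a subspace).\<close>
definition contains_ell1 :: "'b::real_normed_vector itself \<Rightarrow> bool" where
  "contains_ell1 _ \<longleftrightarrow>
     (\<exists>(T::(nat \<Rightarrow> real) \<Rightarrow> 'b) c C. c > 0 \<and>
        (\<forall>a\<in>ell1. \<forall>b\<in>ell1. T (\<lambda>n. a n + b n) = T a + T b) \<and>
        (\<forall>a\<in>ell1. \<forall>r. T (\<lambda>n. r * a n) = r *\<^sub>R T a) \<and>
        (\<forall>a\<in>ell1. c * ell1_norm a \<le> norm (T a) \<and> norm (T a) \<le> C * ell1_norm a))"

end

theory Submission
  imports Defs
begin

lemma hahn_banach_norming:
  fixes y :: "'a::real_normed_vector"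
  shows "\<exists>g::'a \<Rightarrow>\<^sub>L real. norm g \<le> 1 \<and> blinfun_apply g y = norm y"
proof -
  define A where "A = {G::('a\<times>real) set. (0,0)\<in>G \<and> (\<forall>p\<in>G. \<forall>q\<in>G. p+q\<in>G)
     \<and> (\<forall>c. \<forall>p\<in>G. c *\<^sub>R p \<in> G) \<and> (y, norm y)\<in>G \<and> (\<forall>p\<in>G. snd p \<le> norm (fst p))}"
  define G0 where "G0 = range (\<lambda>c::real. c *\<^sub>R (y, norm y))"
  have G0A: "G0 \<in> A"
  proof -
    have "(0,0) \<in> G0" unfolding G0_def by (rule range_eqI[of _ _ 0]) simp
    moreover have "\<forall>p\<in>G0. \<forall>q\<in>G0. p+q\<in>G0" unfolding G0_def
      by (auto simp: scaleR_add_left[symmetric] simp del: scaleR_Pair)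
    moreover have "\<forall>c. \<forall>p\<in>G0. c *\<^sub>R p \<in> G0" unfolding G0_def
      by (auto simp del: scaleR_Pair)
    moreover have "(y, norm y) \<in> G0" unfolding G0_def by (rule range_eqI[of _ _ 1]) simp
    moreover have "\<forall>p\<in>G0. snd p \<le> norm (fst p)" unfolding G0_def
      by (auto intro!: mult_right_mono)
    ultimately show ?thesis unfolding A_def by blast
  qed
  have "\<forall>C\<in>chains A. \<exists>U\<in>A. \<forall>X\<in>C. X \<subseteq> U"
  proof
    fix C assume C: "C \<in> chains A"
    show "\<exists>U\<in>A. \<forall>X\<in>C. X \<subseteq> U"
    proof (cases "C = {}")
      case True then show ?thesis using G0A by blast
    next
      case False
      have CA: "C \<subseteq> A" and ch: "\<forall>X\<in>C. \<forall>Y\<in>C. X \<subseteq> Y \<or> Y \<subseteq> X"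
        using C by (auto simp: chains_def chain_subset_def)
      have "\<Union>C \<in> A"
      proof -
        obtain X0 where X0: "X0 \<in> C" using False by blast
        have "(0,0) \<in> \<Union>C" using X0 CA unfolding A_def by blast
        moreover have "\<forall>p\<in>\<Union>C. \<forall>q\<in>\<Union>C. p+q\<in>\<Union>C"
        proof (intro ballI)
          fix p q assume "p \<in> \<Union>C" "q \<in> \<Union>C"
          then obtain X Y where XY: "X\<in>C" "Y\<in>C" "p\<in>X" "q\<in>Y" by blast
          have clos: "\<And>Z. Z \<in> C \<Longrightarrow> \<forall>p\<in>Z. \<forall>q\<in>Z. p+q\<in>Z" using CA unfolding A_def by blast
          from ch XY(1,2) have "X \<subseteq> Y \<or> Y \<subseteq> X" by blast
          then show "p+q \<in> \<Union>C"
          proof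
            assume "X \<subseteq> Y" then have "p+q \<in> Y" using clos[OF XY(2)] XY by blast
            then show ?thesis using XY by blast
          next
            assume "Y \<subseteq> X" then have "p+q \<in> X" using clos[OF XY(1)] XY by blast
            then show ?thesis using XY by blast
          qed
        qed
        moreover have "\<forall>c. \<forall>p\<in>\<Union>C. c *\<^sub>R p \<in> \<Union>C"
          using CA unfolding A_def by blast
        moreover have "(y, norm y) \<in> \<Union>C" using X0 CA unfolding A_def by blast
        moreover have "\<forall>p\<in>\<Union>C. snd p \<le> norm (fst p)" using CA unfolding A_def by blast
        ultimately show ?thesis unfolding A_def by blast
      qed
      then show ?thesis by blast
    qed
  qed
  from Zorn_Lemma2[OF this] obtain M where MA: "M \<in> A" and Mmax: "\<forall>X\<in>A. M \<subseteq> X \<longrightarrow> X = M"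
    by blast
  have M0: "(0,0)\<in>M" and Madd: "\<And>p q. p\<in>M \<Longrightarrow> q\<in>M \<Longrightarrow> p+q\<in>M"
    and Msc: "\<And>c p. p\<in>M \<Longrightarrow> c *\<^sub>R p \<in> M" and My: "(y, norm y)\<in>M"
    and Mdom: "\<And>x a. (x,a)\<in>M \<Longrightarrow> a \<le> norm x"
    using MA unfolding A_def by auto
  have total: "\<exists>a. (x,a)\<in>M" for x
  proof (rule ccontr)
    assume nx: "\<not> (\<exists>a. (x,a)\<in>M)"
    define S where "S = {a - norm (z - x) | z a. (z,a)\<in>M}"
    have key: "a - norm (z - x) \<le> norm (z' + x) - b" if "(z,a)\<in>M" "(z',b)\<in>M" for z a z' b
    proof -
      have "(z+z', a+b) \<in> M" using Madd[OF that] by simp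
      then have "a + b \<le> norm (z + z')" using Mdom by blast
      also have "\<dots> \<le> norm (z - x) + norm (z' + x)"
        using norm_triangle_ineq[of "z - x" "z' + x"] by simp
      finally show ?thesis by simp
    qed
    define c where "c = Sup S"
    have Sne: "S \<noteq> {}" using M0 unfolding S_def by blast
    have Sbdd: "bdd_above S" unfolding S_def bdd_above_def
      using key[OF _ M0] by fastforce
    have c_ge: "a - norm (z - x) \<le> c" if "(z,a)\<in>M" for z a
      unfolding c_def using that by (intro cSup_upper[OF _ Sbdd]) (auto simp: S_def)
    have c_le: "c \<le> norm (z' + x) - b" if "(z',b)\<in>M" for z' b
      unfolding c_def using Sne by (intro cSup_least) (auto simp: S_def intro: key[OF _ that])
    define M' where "M' = {p + t *\<^sub>R (x, c) | p t. p \<in> M}"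
    have "M' \<in> A"
    proof -
      have "(0,0) \<in> M'" unfolding M'_def using M0 by (auto intro!: exI[of _ "(0,0)"] exI[of _ 0])
      moreover have "\<forall>p\<in>M'. \<forall>q\<in>M'. p+q\<in>M'"
      proof (intro ballI)
        fix p q assume "p\<in>M'" "q\<in>M'"
        then obtain p1 t1 p2 t2 where "p = p1 + t1 *\<^sub>R (x,c)" "q = p2 + t2 *\<^sub>R (x,c)" "p1\<in>M" "p2\<in>M"
          unfolding M'_def by blast
        then show "p+q\<in>M'" unfolding M'_def
          by (intro CollectI exI[of _ "p1+p2"] exI[of _ "t1+t2"]) (auto simp: Madd algebra_simps simp del: scaleR_Pair)
      qed
      moreover have "\<forall>d. \<forall>p\<in>M'. d *\<^sub>R p \<in> M'"
      proof (intro allI ballI)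
        fix d p assume "p\<in>M'"
        then obtain p1 t1 where "p = p1 + t1 *\<^sub>R (x,c)" "p1\<in>M"
          unfolding M'_def by blast
        then show "d *\<^sub>R p\<in>M'" unfolding M'_def
          by (intro CollectI exI[of _ "d *\<^sub>R p1"] exI[of _ "d*t1"]) (auto simp: Msc algebra_simps simp del: scaleR_Pair)
      qed
      moreover have "(y, norm y) \<in> M'" unfolding M'_def
      proof (intro CollectI exI conjI)
        show "(y, norm y) = (y, norm y) + 0 *\<^sub>R (x,c)" by simp
      qed (rule My)
      moreover have "\<forall>p\<in>M'. snd p \<le> norm (fst p)"
      proof
        fix p assume "p\<in>M'"
        then obtain z a t where p: "p = (z,a) + t *\<^sub>R (x,c)" and za: "(z,a)\<in>M"
          unfolding M'_def by auto
        have "a + t * c \<le> norm (z + t *\<^sub>R x)"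
        proof (cases t "0::real" rule: linorder_cases)
          case equal then show ?thesis using Mdom[OF za] by simp
        next
          case greater
          have "((1/t) *\<^sub>R z, (1/t) * a) \<in> M" using Msc[OF za, of "1/t"] by simp
          from c_le[OF this] have "c \<le> norm ((1/t) *\<^sub>R z + x) - (1/t) * a" .
          then have "t * c \<le> t * norm ((1/t) *\<^sub>R z + x) - a"
            using greater by (simp add: field_simps)
          also have "t * norm ((1/t) *\<^sub>R z + x) = norm (z + t *\<^sub>R x)"
          proof -
            have "t * norm ((1/t) *\<^sub>R z + x) = norm (t *\<^sub>R ((1/t) *\<^sub>R z + x))"
              using greater by simp
            also have "t *\<^sub>R ((1/t) *\<^sub>R z + x) = z + t *\<^sub>R x"
              using greater by (simp add: scaleR_add_right)
            finally show ?thesis .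
          qed
          finally show ?thesis by simp
        next
          case less
          define s where "s = -t"
          have s: "s > 0" using less by (simp add: s_def)
          have "((1/s) *\<^sub>R z, (1/s) * a) \<in> M" using Msc[OF za, of "1/s"] by simp
          from c_ge[OF this] have "(1/s) * a - norm ((1/s) *\<^sub>R z - x) \<le> c" .
          then have "a - s * norm ((1/s) *\<^sub>R z - x) \<le> s * c"
            using s by (simp add: field_simps)
          also have "s * norm ((1/s) *\<^sub>R z - x) = norm (z + t *\<^sub>R x)"
          proof -
            have "s * norm ((1/s) *\<^sub>R z - x) = norm (s *\<^sub>R ((1/s) *\<^sub>R z - x))"
              using s by simp
            also have "s *\<^sub>R ((1/s) *\<^sub>R z - x) = z + t *\<^sub>R x"
              using s by (simp add: scaleR_diff_right s_def)
            finally show ?thesis .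
          qed
          finally show ?thesis by (simp add: s_def)
        qed
        then show "snd p \<le> norm (fst p)" using p by simp
      qed
      ultimately show ?thesis unfolding A_def by blast
    qed
    moreover have "M \<subseteq> M'"
    proof
      fix p assume "p \<in> M"
      moreover have "p = p + 0 *\<^sub>R (x,c)" by (simp add: zero_prod_def)
      ultimately show "p \<in> M'" unfolding M'_def by blast
    qed
    ultimately have "M' = M" using Mmax by blast
    moreover have "(x,c) \<in> M'"
    proof -
      have "(x,c) = (0,0) + 1 *\<^sub>R (x,c)" by simp
      then show ?thesis unfolding M'_def using M0 by blast
    qed
    ultimately show False using nx by blast
  qed
  have uniq: "a = b" if "(x,a)\<in>M" "(x,b)\<in>M" for x a b
  proof -
    have "(x,a) + (-1) *\<^sub>R (x,b) \<in> M" using Madd[OF that(1) Msc[OF that(2)]] .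
    then have "(0, a - b) \<in> M" by simp
    then have 1: "a - b \<le> 0" using Mdom by fastforce
    have "(x,b) + (-1) *\<^sub>R (x,a) \<in> M" using Madd[OF that(2) Msc[OF that(1)]] .
    then have "(0, b - a) \<in> M" by simp
    then have "b - a \<le> 0" using Mdom by fastforce
    with 1 show ?thesis by simp
  qed
  define \<phi> where "\<phi> x = (THE a. (x,a)\<in>M)" for x
  have phiM: "(x, \<phi> x) \<in> M" for x
    unfolding \<phi>_def using total[of x] uniq by (metis theI)
  have phi_eq: "\<phi> x = a" if "(x,a)\<in>M" for x a
    using uniq[OF phiM that] .
  have add: "\<phi> (x + z) = \<phi> x + \<phi> z" for x z
    using Madd[OF phiM phiM, of x z] phi_eq by simp
  have scale: "\<phi> (r *\<^sub>R x) = r * \<phi> x" for r x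
    using Msc[OF phiM, of r x] phi_eq by simp
  have bnd: "norm (\<phi> x) \<le> norm x * 1" for x
  proof -
    have "\<phi> x \<le> norm x" using Mdom[OF phiM] .
    moreover have "\<phi> (-x) \<le> norm (-x)" using Mdom[OF phiM] .
    moreover have "\<phi> (-x) = - \<phi> x" using scale[of "-1" x] by simp
    ultimately show ?thesis by auto
  qed
  have bl: "bounded_linear \<phi>"
    by (rule bounded_linear_intro[OF add _ bnd]) (simp add: scale)
  have "\<phi> y = norm y" using phi_eq[OF My] .
  moreover have "norm (Blinfun \<phi>) \<le> 1"
    by (rule norm_blinfun_bound) (use bnd bounded_linear_Blinfun_apply[OF bl] in auto)
  ultimately show ?thesis using bounded_linear_Blinfun_apply[OF bl] by (metis)
qed

lemma sd2_step:
  fixes f :: "nat \<Rightarrow> ('a::real_normed_vector \<Rightarrow>\<^sub>L real)"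
  assumes sd: "strong_diameter_two TYPE('a)"
    and m: "m \<ge> 1" and f: "\<forall>i<m. norm (f i) = 1 \<and> \<alpha> i > 0"
    and \<eta>: "\<eta> > 0" "\<eta> \<le> 1"
    and hb: "\<And>y::'a. \<exists>g::'a \<Rightarrow>\<^sub>L real. norm g \<le> 1 \<and> blinfun_apply g y = norm y"
  shows "\<exists>g::'a\<Rightarrow>\<^sub>L real. norm g \<le> 1 \<and> (\<forall>i<m. \<exists>x z. x \<in> slice (f i) (\<alpha> i) \<and>
           z \<in> slice (f i) (\<alpha> i) \<and> blinfun_apply g x \<ge> 1 - \<eta> \<and> blinfun_apply g z \<le> -(1-\<eta>))"
proof -
  define lam where "lam = (\<lambda>i::nat. 1 / real m)"
  define D where "D = {(\<Sum>i<m. lam i *\<^sub>R x i) | x::nat \<Rightarrow> 'a. \<forall>i<m. x i \<in> slice (f i) (\<alpha> i)}"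
  have mpos: "real m > 0" using m by simp
  have lam: "\<forall>i<m. lam i \<ge> 0 \<and> norm (f i) = 1 \<and> \<alpha> i > 0" using f by (simp add: lam_def)
  have lsum: "(\<Sum>i<m. lam i) = 1" using mpos by (simp add: lam_def)
  have diam: "diameter D = 2"
    using sd m lam lsum unfolding strong_diameter_two_def D_def by blast
  have bD: "bounded D"
  proof (rule boundedI)
    fix u assume "u \<in> D"
    then obtain x where u: "u = (\<Sum>i<m. lam i *\<^sub>R x i)" and x: "\<forall>i<m. x i \<in> slice (f i) (\<alpha> i)"
      unfolding D_def by blast
    have "norm u \<le> (\<Sum>i<m. norm (lam i *\<^sub>R x i))" unfolding u by (rule norm_sum)
    also have "\<dots> \<le> (\<Sum>i<m. lam i)"
    proof (rule sum_mono)
      fix i assume "i \<in> {..<m}"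
      then have "norm (x i) \<le> 1" using x by (auto simp: slice_def)
      then show "norm (lam i *\<^sub>R x i) \<le> lam i" using mpos by (simp add: lam_def divide_right_mono)
    qed
    finally show "norm u \<le> 1" using lsum by simp
  qed
  have "0 < 2 - \<eta> / real m"
  proof -
    have "\<eta> / real m \<le> \<eta>" using \<eta> m by (simp add: divide_le_eq)
    then show ?thesis using \<eta> by simp
  qed
  moreover have "2 - \<eta> / real m < diameter D" using diam \<eta> mpos by simp
  ultimately obtain u v where uv: "u \<in> D" "v \<in> D" "2 - \<eta> / real m < dist u v"
    using diameter_lower_bounded[OF bD] by blast
  obtain x where u: "u = (\<Sum>i<m. lam i *\<^sub>R x i)" and x: "\<forall>i<m. x i \<in> slice (f i) (\<alpha> i)"
    using uv(1) unfolding D_def by blast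
  obtain z where v: "v = (\<Sum>i<m. lam i *\<^sub>R z i)" and z: "\<forall>i<m. z i \<in> slice (f i) (\<alpha> i)"
    using uv(2) unfolding D_def by blast
  obtain g :: "'a \<Rightarrow>\<^sub>L real" where g: "norm g \<le> 1" "blinfun_apply g (u - v) = norm (u - v)"
    using hb by blast
  have gle: "\<bar>blinfun_apply g w\<bar> \<le> 1" if "norm w \<le> 1" for w
  proof -
    have "\<bar>blinfun_apply g w\<bar> \<le> norm g * norm w" using norm_blinfun[of g w] by simp
    also have "\<dots> \<le> 1 * 1" using g(1) that by (intro mult_mono) auto
    finally show ?thesis by simp
  qed
  define d where "d i = blinfun_apply g (x i) - blinfun_apply g (z i)" for i
  have dle: "d i \<le> 2" if "i < m" for i
  proof -
    have "norm (x i) \<le> 1" "norm (z i) \<le> 1" using x z that by (auto simp: slice_def)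
    then show ?thesis unfolding d_def using gle by (smt (verit))
  qed
  have "blinfun_apply g (u - v) = (\<Sum>i<m. lam i * d i)"
    unfolding u v d_def by (simp add: blinfun.diff_right blinfun.sum_right blinfun.scaleR_right
        sum_subtractf[symmetric] right_diff_distrib)
  also have "\<dots> = (\<Sum>i<m. d i) / real m"
    by (simp add: lam_def sum_divide_distrib)
  finally have "(\<Sum>i<m. d i) / real m > 2 - \<eta> / real m"
    using g(2) uv(3) by (simp add: dist_norm)
  then have "real m * (2 - \<eta> / real m) < real m * ((\<Sum>i<m. d i) / real m)"
    using mpos by (rule mult_strict_left_mono)
  then have sumd: "(\<Sum>i<m. d i) > 2 * real m - \<eta>"
    using mpos by (simp add: right_diff_distrib)
  have dj: "d j > 2 - \<eta>" if j: "j < m" for j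
  proof -
    have "(\<Sum>i<m. d i) = d j + (\<Sum>i\<in>{..<m} - {j}. d i)"
      using j by (simp add: sum.remove)
    also have "(\<Sum>i\<in>{..<m} - {j}. d i) \<le> (\<Sum>i\<in>{..<m} - {j}. 2)"
      using dle by (intro sum_mono) auto
    also have "\<dots> = 2 * (real m - 1)" using j by (simp add: card_Diff_singleton)
    finally show ?thesis using sumd by simp
  qed
  show ?thesis
  proof (intro exI[of _ g] conjI allI impI)
    show "norm g \<le> 1" by (rule g(1))
  next
    fix i assume i: "i < m"
    have "norm (x i) \<le> 1" "norm (z i) \<le> 1" using x z i by (auto simp: slice_def)
    then have "\<bar>blinfun_apply g (x i)\<bar> \<le> 1" "\<bar>blinfun_apply g (z i)\<bar> \<le> 1" using gle by auto
    then show "\<exists>x z. x \<in> slice (f i) (\<alpha> i) \<and> z \<in> slice (f i) (\<alpha> i) \<and>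
           blinfun_apply g x \<ge> 1 - \<eta> \<and> blinfun_apply g z \<le> -(1-\<eta>)"
      using dj[OF i] x z i unfolding d_def by (intro exI[of _ "x i"] exI[of _ "z i"]) auto
  qed
qed

definition sgnf :: "nat set \<Rightarrow> nat \<Rightarrow> real" where
  "sgnf s k = (if k \<in> s then 1 else -1)"

definition dd :: "nat \<Rightarrow> real" where
  "dd n = 1/2 - 1/2^(n+1)"

definition InvG :: "nat \<Rightarrow> (nat \<Rightarrow> ('a::real_normed_vector \<Rightarrow>\<^sub>L real)) \<Rightarrow> bool" where
  "InvG n G \<longleftrightarrow> (\<forall>k<n. norm (G k) \<le> 1) \<and>
     (\<forall>s \<subseteq> {..<n}. \<exists>x. norm x \<le> 1 \<and> (\<Sum>k<n. sgnf s k * blinfun_apply (G k) x) \<ge> real n - dd n)"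

lemma abs_sgnf[simp]: "\<bar>sgnf s k\<bar> = 1" by (simp add: sgnf_def)

lemma inv_step:
  fixes G :: "nat \<Rightarrow> ('a::real_normed_vector \<Rightarrow>\<^sub>L real)"
  assumes sd: "strong_diameter_two TYPE('a)"
    and hb: "\<And>y::'a. \<exists>g::'a \<Rightarrow>\<^sub>L real. norm g \<le> 1 \<and> blinfun_apply g y = norm y"
    and f0: "norm (f0 :: 'a \<Rightarrow>\<^sub>L real) = 1"
    and inv: "InvG n G"
  shows "\<exists>g. InvG (Suc n) (G(n:=g))"
proof -
  define \<eta> :: real where "\<eta> = 1/2^(n+3)"
  define \<alpha> :: real where "\<alpha> = \<eta> / (real n + 1)"
  have \<eta>: "\<eta> > 0" "\<eta> \<le> 1" by (auto simp: \<eta>_def)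
  have \<alpha>: "\<alpha> > 0" using \<eta> by (simp add: \<alpha>_def)
  have Gn: "\<And>k. k < n \<Longrightarrow> norm (G k) \<le> 1" using inv by (simp add: InvG_def)
  have Gx: "\<And>s. s \<subseteq> {..<n} \<Longrightarrow> \<exists>x. norm x \<le> 1 \<and> (\<Sum>k<n. sgnf s k * blinfun_apply (G k) x) \<ge> real n - dd n"
    using inv by (simp add: InvG_def)
  define P where "P = Pow {..<n}"
  define m where "m = card P"
  have finP: "finite P" by (simp add: P_def)
  have m1: "m \<ge> 1" unfolding m_def P_def by (simp add: card_Pow)
  obtain e where e: "bij_betw e {0..<m} P" using ex_bij_betw_nat_finite[OF finP] m_def by blast
  define h where "h s = (\<Sum>k<n. sgnf s k *\<^sub>R G k)" for s
  have happ: "blinfun_apply (h s) x = (\<Sum>k<n. sgnf s k * blinfun_apply (G k) x)" for s x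
    by (simp add: h_def blinfun.sum_left blinfun.scaleR_left)
  have hnorm: "norm (h s) \<le> real n" for s
  proof -
    have "norm (h s) \<le> (\<Sum>k<n. norm (sgnf s k *\<^sub>R G k))" unfolding h_def by (rule norm_sum)
    also have "\<dots> \<le> (\<Sum>k<n. 1)" using Gn by (intro sum_mono) simp
    finally show ?thesis by simp
  qed
  define F where "F s = (if h s = 0 then f0 else (1 / norm (h s)) *\<^sub>R h s)" for s
  have Fn: "norm (F s) = 1" for s using f0 by (simp add: F_def)
  have "\<exists>g::'a\<Rightarrow>\<^sub>L real. norm g \<le> 1 \<and> (\<forall>i<m. \<exists>x z. x \<in> slice (F (e i)) \<alpha> \<and>
           z \<in> slice (F (e i)) \<alpha> \<and> blinfun_apply g x \<ge> 1 - \<eta> \<and> blinfun_apply g z \<le> -(1-\<eta>))"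
    by (rule sd2_step[OF sd m1 _ \<eta> hb]) (simp add: Fn \<alpha>)
  then obtain g :: "'a\<Rightarrow>\<^sub>L real" where g: "norm g \<le> 1"
    and gi: "\<And>i. i < m \<Longrightarrow> \<exists>x z. x \<in> slice (F (e i)) \<alpha> \<and>
           z \<in> slice (F (e i)) \<alpha> \<and> blinfun_apply g x \<ge> 1 - \<eta> \<and> blinfun_apply g z \<le> -(1-\<eta>)"
    by blast
  have key: "(\<Sum>k<n. sgnf s k * blinfun_apply (G k) w) \<ge> real n - dd n - \<eta>"
    if s: "s \<subseteq> {..<n}" and w: "w \<in> slice (F s) \<alpha>" for s w
  proof -
    obtain x0 where x0: "norm x0 \<le> 1" "(\<Sum>k<n. sgnf s k * blinfun_apply (G k) x0) \<ge> real n - dd n"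
      using Gx[OF s] by blast
    have "blinfun_apply (h s) x0 \<le> norm (h s)"
    proof -
      have "blinfun_apply (h s) x0 \<le> norm (h s) * norm x0"
        using norm_blinfun[of "h s" x0] by simp
      also have "\<dots> \<le> norm (h s) * 1" using x0(1) by (intro mult_left_mono) auto
      finally show ?thesis by simp
    qed
    then have hlow: "norm (h s) \<ge> real n - dd n" using x0(2) happ by simp
    show ?thesis
    proof (cases "h s = 0")
      case True
      then have "(\<Sum>k<n. sgnf s k * blinfun_apply (G k) w) = 0" using happ[of s w] by simp
      then show ?thesis using hlow True \<eta> by simp
    next
      case False
      then have hp: "norm (h s) > 0" by simp
      have "blinfun_apply (F s) w > 1 - \<alpha>" using w by (simp add: slice_def)
      then have "blinfun_apply (h s) w / norm (h s) > 1 - \<alpha>"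
        using False by (simp add: F_def blinfun.scaleR_left)
      then have "blinfun_apply (h s) w > norm (h s) * (1 - \<alpha>)"
        using hp by (simp add: pos_less_divide_eq mult.commute)
      moreover have "norm (h s) * \<alpha> \<le> \<eta>"
      proof -
        have "norm (h s) * \<alpha> \<le> real n * \<alpha>" using hnorm \<alpha> by (intro mult_right_mono) auto
        also have "\<dots> \<le> \<eta>" using \<eta> by (simp add: \<alpha>_def field_simps)
        finally show ?thesis .
      qed
      ultimately show ?thesis using hlow happ[of s w] by (simp add: algebra_simps)
    qed
  qed
  have dd_suc: "dd (Suc n) = dd n + 2 * \<eta>" by (simp add: dd_def \<eta>_def field_simps power_add)
  show ?thesis
  proof (rule exI[of _ g], unfold InvG_def, intro conjI allI impI)
    fix k assume "k < Suc n"
    then show "norm ((G(n := g)) k) \<le> 1" using Gn g by (cases "k = n") auto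
  next
    fix s' assume s': "s' \<subseteq> {..<Suc n}"
    define s where "s = s' \<inter> {..<n}"
    have sP: "s \<in> P" by (simp add: s_def P_def)
    then obtain i where i: "i < m" "e i = s" using e unfolding bij_betw_def by force
    obtain x z where xz: "x \<in> slice (F s) \<alpha>" "z \<in> slice (F s) \<alpha>" "blinfun_apply g x \<ge> 1 - \<eta>"
      "blinfun_apply g z \<le> -(1-\<eta>)" using gi[OF i(1)] i(2) by blast
    define w where "w = (if n \<in> s' then x else z)"
    have wn: "norm w \<le> 1" using xz by (auto simp: w_def slice_def)
    have ssub: "s \<subseteq> {..<n}" by (simp add: s_def)
    have kw: "(\<Sum>k<n. sgnf s k * blinfun_apply (G k) w) \<ge> real n - dd n - \<eta>"
      using key[OF ssub] xz by (simp add: w_def)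
    have lastw: "sgnf s' n * blinfun_apply g w \<ge> 1 - \<eta>"
      using xz by (simp add: w_def sgnf_def)
    have "(\<Sum>k<Suc n. sgnf s' k * blinfun_apply ((G(n := g)) k) w)
        = (\<Sum>k<n. sgnf s k * blinfun_apply (G k) w) + sgnf s' n * blinfun_apply g w"
      by (simp add: s_def sgnf_def)
    also have "\<dots> \<ge> real (Suc n) - dd (Suc n)"
      using kw lastw dd_suc by simp
    finally show "\<exists>x. norm x \<le> 1 \<and> real (Suc n) - dd (Suc n) \<le> (\<Sum>k<Suc n. sgnf s' k * blinfun_apply ((G(n := g)) k) x)"
      using wn by blast
  qed
qed

lemma invG_cong: assumes "InvG n G" "\<And>k. k < n \<Longrightarrow> G' k = G k" shows "InvG n G'"
proof -
  have "(\<Sum>k<n. sgnf s k * blinfun_apply (G' k) x) = (\<Sum>k<n. sgnf s k * blinfun_apply (G k) x)" for s x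
    using assms(2) by (intro sum.cong) auto
  then show ?thesis using assms unfolding InvG_def by auto
qed

lemma invG_0: "InvG 0 G"
  unfolding InvG_def by (auto simp: dd_def intro: exI[of _ 0])

lemma exists_seq:
  fixes G0 :: "nat \<Rightarrow> ('a::real_normed_vector \<Rightarrow>\<^sub>L real)"
  assumes step: "\<And>n G. InvG n (G :: nat \<Rightarrow> ('a \<Rightarrow>\<^sub>L real)) \<Longrightarrow> \<exists>g. InvG (Suc n) (G(n:=g))"
  shows "\<exists>gg :: nat \<Rightarrow> ('a \<Rightarrow>\<^sub>L real). \<forall>n. InvG n gg"
proof -
  define nxt where "nxt n G = G(n := SOME g. InvG (Suc n) (G(n:=g)))"
    for n and G :: "nat \<Rightarrow> ('a \<Rightarrow>\<^sub>L real)"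
  define Gs where "Gs n = rec_nat (\<lambda>_. 0) nxt n" for n
  have GsS: "Gs (Suc n) = nxt n (Gs n)" for n by (simp add: Gs_def)
  have inv: "InvG n (Gs n)" for n
  proof (induction n)
    case 0 show ?case by (rule invG_0)
  next
    case (Suc n)
    from step[OF Suc] have "InvG (Suc n) ((Gs n)(n := SOME g. InvG (Suc n) ((Gs n)(n:=g))))"
      by (rule someI_ex)
    then show ?case by (simp only: GsS nxt_def)
  qed
  have agree: "k < n \<Longrightarrow> Gs n k = Gs (Suc k) k" for n k
  proof (induction n)
    case 0 then show ?case by simp
  next
    case (Suc n)
    show ?case
    proof (cases "k = n")
      case True then show ?thesis by simp
    next
      case False
      then have "k < n" using Suc.prems by simp
      then show ?thesis using Suc.IH False by (simp add: GsS nxt_def)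
    qed
  qed
  define gg where "gg k = Gs (Suc k) k" for k
  have "InvG n gg" for n
  proof (rule invG_cong[OF inv[of n]])
    fix k assume "k < n"
    then show "gg k = Gs n k" unfolding gg_def by (rule agree[symmetric])
  qed
  then show ?thesis by blast
qed

lemma invG_lower:
  fixes gg :: "nat \<Rightarrow> ('a::real_normed_vector \<Rightarrow>\<^sub>L real)"
  assumes inv: "InvG n gg"
  shows "norm (\<Sum>k<n. a k *\<^sub>R gg k) \<ge> (1/2) * (\<Sum>k<n. \<bar>a k\<bar>)"
proof -
  define s where "s = {k. k < n \<and> a k \<ge> 0}"
  have Gn: "\<And>k. k < n \<Longrightarrow> norm (gg k) \<le> 1" using inv by (simp add: InvG_def)
  obtain x where x: "norm x \<le> 1" "(\<Sum>k<n. sgnf s k * blinfun_apply (gg k) x) \<ge> real n - dd n"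
  proof -
    have "s \<subseteq> {..<n}" by (auto simp: s_def)
    moreover have "\<forall>s \<subseteq> {..<n}. \<exists>x. norm x \<le> 1 \<and> (\<Sum>k<n. sgnf s k * blinfun_apply (gg k) x) \<ge> real n - dd n"
      using inv unfolding InvG_def by (rule conjunct2)
    ultimately obtain x where "norm x \<le> 1 \<and> (\<Sum>k<n. sgnf s k * blinfun_apply (gg k) x) \<ge> real n - dd n"
      by blast
    then show ?thesis using that by blast
  qed
  have dd: "dd n \<le> 1/2" by (simp add: dd_def)
  define t where "t k = sgnf s k * blinfun_apply (gg k) x" for k
  have tle: "t k \<le> 1" if "k < n" for k
  proof -
    have "\<bar>blinfun_apply (gg k) x\<bar> \<le> norm (gg k) * norm x" using norm_blinfun[of "gg k" x] by simp
    also have "\<dots> \<le> 1 * 1" using Gn[OF that] x(1) by (intro mult_mono) auto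
    moreover have "t k \<le> \<bar>blinfun_apply (gg k) x\<bar>" unfolding t_def sgnf_def by auto
    ultimately show ?thesis by simp
  qed
  have tge: "t j \<ge> 1/2" if j: "j < n" for j
  proof -
    have "(\<Sum>k<n. t k) = t j + (\<Sum>k\<in>{..<n} - {j}. t k)"
      using j by (simp add: sum.remove)
    also have "(\<Sum>k\<in>{..<n} - {j}. t k) \<le> (\<Sum>k\<in>{..<n} - {j}. 1)"
      using tle by (intro sum_mono) auto
    also have "\<dots> = real n - 1" using j by (simp add: card_Diff_singleton)
    finally have "(\<Sum>k<n. t k) \<le> t j + (real n - 1)" by simp
    moreover have "(\<Sum>k<n. t k) \<ge> real n - 1/2" using x(2) dd unfolding t_def by simp
    ultimately show ?thesis by simp
  qed
  have at: "a k * blinfun_apply (gg k) x = \<bar>a k\<bar> * t k" if "k < n" for k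
    using that by (cases "a k \<ge> 0") (simp_all add: t_def sgnf_def s_def)
  have "(1/2) * (\<Sum>k<n. \<bar>a k\<bar>) = (\<Sum>k<n. \<bar>a k\<bar> * (1/2))" by (subst mult.commute) (rule sum_distrib_right)
  also have "\<dots> \<le> (\<Sum>k<n. \<bar>a k\<bar> * t k)"
    by (rule sum_mono, rule mult_left_mono) (use tge in auto)
  also have "\<dots> = (\<Sum>k<n. a k * blinfun_apply (gg k) x)" using at by simp
  also have "\<dots> = blinfun_apply (\<Sum>k<n. a k *\<^sub>R gg k) x"
    by (simp add: blinfun.sum_left blinfun.scaleR_left)
  also have "\<dots> \<le> norm (\<Sum>k<n. a k *\<^sub>R gg k) * norm x"
    using norm_blinfun[of "\<Sum>k<n. a k *\<^sub>R gg k" x] by simp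
  also have "\<dots> \<le> norm (\<Sum>k<n. a k *\<^sub>R gg k) * 1" using x(1) by (rule mult_left_mono) auto
  finally show ?thesis by simp
qed

theorem corollary3p7:
  assumes "\<exists>x::'a::banach. x \<noteq> 0"
    and "strong_diameter_two TYPE('a)"
  shows "contains_ell1 TYPE('a \<Rightarrow>\<^sub>L real)"
proof -
  have hb: "\<And>y::'a. \<exists>g::'a \<Rightarrow>\<^sub>L real. norm g \<le> 1 \<and> blinfun_apply g y = norm y"
    by (rule hahn_banach_norming)
  obtain x0 :: 'a where x0: "x0 \<noteq> 0" using assms(1) by blast
  obtain f0 :: "'a \<Rightarrow>\<^sub>L real" where f0: "norm f0 \<le> 1" "blinfun_apply f0 x0 = norm x0"
    using hb by blast
  have "norm x0 \<le> norm f0 * norm x0" using norm_blinfun[of f0 x0] f0(2) by simp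
  then have "1 \<le> norm f0" using x0 by simp
  then have f0n: "norm f0 = 1" using f0(1) by simp
  obtain gg :: "nat \<Rightarrow> ('a \<Rightarrow>\<^sub>L real)" where gg: "\<And>n. InvG n gg"
    using exists_seq[OF inv_step[OF assms(2) hb f0n]] by blast
  have ggn: "norm (gg k) \<le> 1" for k using gg[of "Suc k"] by (simp add: InvG_def)
  define T where "T a = (\<Sum>k. a k *\<^sub>R gg k)" for a :: "nat \<Rightarrow> real"
  have sn: "summable (\<lambda>k. norm (a k *\<^sub>R gg k))" if "a \<in> ell1" for a
  proof (rule summable_comparison_test'[where N=0])
    show "summable (\<lambda>k. \<bar>a k\<bar>)" using that by (simp add: ell1_def)
  next
    fix k show "norm (norm (a k *\<^sub>R gg k)) \<le> \<bar>a k\<bar>"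
      using ggn[of k] by (simp add: mult_left_le)
  qed
  have sm: "summable (\<lambda>k. a k *\<^sub>R gg k)" if "a \<in> ell1" for a
    by (rule summable_norm_cancel[OF sn[OF that]])
  have add: "\<forall>a\<in>ell1. \<forall>b\<in>ell1. T (\<lambda>n. a n + b n) = T a + T b"
  proof (intro ballI)
    fix a b assume a: "a \<in> ell1" and b: "b \<in> ell1"
    show "T (\<lambda>n. a n + b n) = T a + T b"
      unfolding T_def by (simp add: suminf_add[OF sm[OF a] sm[OF b]] scaleR_add_left)
  qed
  have sc: "\<forall>a\<in>ell1. \<forall>r. T (\<lambda>n. r * a n) = r *\<^sub>R T a"
  proof (intro ballI allI)
    fix a r assume a: "a \<in> ell1"
    show "T (\<lambda>n. r * a n) = r *\<^sub>R T a"
      unfolding T_def using suminf_scaleR_right[OF sm[OF a], of r] by simp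
  qed
  have bnds: "\<forall>a\<in>ell1. 1/2 * ell1_norm a \<le> norm (T a) \<and> norm (T a) \<le> 1 * ell1_norm a"
  proof (intro ballI conjI)
    fix a assume a: "a \<in> ell1"
    have sa: "summable (\<lambda>k. \<bar>a k\<bar>)" using a by (simp add: ell1_def)
    have l1: "(\<lambda>n. norm (\<Sum>k<n. a k *\<^sub>R gg k)) \<longlonglongrightarrow> norm (T a)"
      unfolding T_def by (intro tendsto_norm summable_LIMSEQ sm[OF a])
    have l2: "(\<lambda>n. (1/2) * (\<Sum>k<n. \<bar>a k\<bar>)) \<longlonglongrightarrow> (1/2) * ell1_norm a"
      unfolding ell1_norm_def by (intro tendsto_mult_left summable_LIMSEQ sa)
    show "1/2 * ell1_norm a \<le> norm (T a)"
      by (rule LIMSEQ_le[OF l2 l1]) (use invG_lower[OF gg] in auto)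
    have "norm (T a) \<le> (\<Sum>k. norm (a k *\<^sub>R gg k))" unfolding T_def by (rule summable_norm[OF sn[OF a]])
    also have "\<dots> \<le> (\<Sum>k. \<bar>a k\<bar>)"
      by (rule suminf_le[OF _ sn[OF a] sa]) (use ggn in \<open>simp add: mult_left_le\<close>)
    finally show "norm (T a) \<le> 1 * ell1_norm a" by (simp add: ell1_norm_def)
  qed
  have "(1/2::real) > 0" by simp
  then show ?thesis unfolding contains_ell1_def using add sc bnds by blast
qed

end
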